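(* Let $G$ be a finite abelian group and consider any $(k,l)$ fractional network code over $G$ that is a solution of the sum-network $\mathcal{S}_3'$. Then the map $(X_1,X_2,X_3)\mapsto$ (the pair of vectors carried on the edges $(u_1,v_1)$ and $(u_2,v_2)$) is injective on $G^k\times G^k\times G^k$; equivalently, terminal $t_3$ can recover each of $X_1,X_2,X_3$ individually. Consequently $|G|^{2l}\ge |G|^{3k}$.
   Context: The sum-network $\mathcal{S}_3'$ has sources $s_1,s_2,s_3$, terminals $t_1,t_2,t_3$, intermediate nodes $u_1,v_1,u_2,v_2,u_3$, and edges $(s_1,u_1),(s_3,u_1),(u_1,v_1),(v_1,t_1),(v_1,t_3),(s_2,u_2),(s_3,u_2),(u_2,v_2),(v_2,t_2),(v_2,t_3),(s_1,t_2),(s_1,t_1),(s_2,u_3),(s_1,u_3),(u_3,t_1)$. A $(k,l)$ fractional network code over $G$: each source $s_i$ holds $X_i\in G^k$ and sends on each outgoing edge a function $G^k\to G^l$ of $X_i$; each edge whose tail $v$ is not a source carries a function $G^{l|In(v)|}\to G^l$ of the vectors on the incoming edges of $v$; each terminal applies a decoding function $G^{l|In(t)|}\to G^k$. It is a solution if every terminal outputs $X_1+X_2+X_3$ (componentwise sum in $G^k$) for all messages. *)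

theory Defs
  imports "HOL-Analysis.Finite_Cartesian_Product"
begin

text \<open>G^k is rendered as the type 'g^'k, G^l as 'g^'l (k = CARD('k), l = CARD('l)).
  One field per edge; a non-source edge out of a node v takes the vectors on the
  incoming edges of v (in a fixed order); terminals have decoding functions.\<close>

record ('g, 'k, 'l) S3code =
  e_s1u1 :: "'g^'k \<Rightarrow> 'g^'l"
  e_s3u1 :: "'g^'k \<Rightarrow> 'g^'l"
  e_s2u2 :: "'g^'k \<Rightarrow> 'g^'l"
  e_s3u2 :: "'g^'k \<Rightarrow> 'g^'l"
  e_s1t2 :: "'g^'k \<Rightarrow> 'g^'l"
  e_s1t1 :: "'g^'k \<Rightarrow> 'g^'l"
  e_s2u3 :: "'g^'k \<Rightarrow> 'g^'l"
  e_s1u3 :: "'g^'k \<Rightarrow> 'g^'l"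
  e_u1v1 :: "'g^'l \<Rightarrow> 'g^'l \<Rightarrow> 'g^'l"
  e_v1t1 :: "'g^'l \<Rightarrow> 'g^'l"
  e_v1t3 :: "'g^'l \<Rightarrow> 'g^'l"
  e_u2v2 :: "'g^'l \<Rightarrow> 'g^'l \<Rightarrow> 'g^'l"
  e_v2t2 :: "'g^'l \<Rightarrow> 'g^'l"
  e_v2t3 :: "'g^'l \<Rightarrow> 'g^'l"
  e_u3t1 :: "'g^'l \<Rightarrow> 'g^'l \<Rightarrow> 'g^'l"
  dec_t1 :: "'g^'l \<Rightarrow> 'g^'l \<Rightarrow> 'g^'l \<Rightarrow> 'g^'k"
  dec_t2 :: "'g^'l \<Rightarrow> 'g^'l \<Rightarrow> 'g^'k"
  dec_t3 :: "'g^'l \<Rightarrow> 'g^'l \<Rightarrow> 'g^'k"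

definition val_u1v1 :: "('g, 'k::finite, 'l::finite) S3code \<Rightarrow> 'g^'k \<Rightarrow> 'g^'k \<Rightarrow> 'g^'k \<Rightarrow> 'g^'l" where
  "val_u1v1 C X1 X2 X3 = e_u1v1 C (e_s1u1 C X1) (e_s3u1 C X3)"

definition val_u2v2 :: "('g, 'k::finite, 'l::finite) S3code \<Rightarrow> 'g^'k \<Rightarrow> 'g^'k \<Rightarrow> 'g^'k \<Rightarrow> 'g^'l" where
  "val_u2v2 C X1 X2 X3 = e_u2v2 C (e_s2u2 C X2) (e_s3u2 C X3)"

definition val_u3t1 :: "('g, 'k::finite, 'l::finite) S3code \<Rightarrow> 'g^'k \<Rightarrow> 'g^'k \<Rightarrow> 'g^'k \<Rightarrow> 'g^'l" where
  "val_u3t1 C X1 X2 X3 = e_u3t1 C (e_s2u3 C X2) (e_s1u3 C X1)"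

definition out_t1 :: "('g, 'k::finite, 'l::finite) S3code \<Rightarrow> 'g^'k \<Rightarrow> 'g^'k \<Rightarrow> 'g^'k \<Rightarrow> 'g^'k" where
  "out_t1 C X1 X2 X3 = dec_t1 C (e_v1t1 C (val_u1v1 C X1 X2 X3)) (e_s1t1 C X1) (val_u3t1 C X1 X2 X3)"

definition out_t2 :: "('g, 'k::finite, 'l::finite) S3code \<Rightarrow> 'g^'k \<Rightarrow> 'g^'k \<Rightarrow> 'g^'k \<Rightarrow> 'g^'k" where
  "out_t2 C X1 X2 X3 = dec_t2 C (e_v2t2 C (val_u2v2 C X1 X2 X3)) (e_s1t2 C X1)"

definition out_t3 :: "('g, 'k::finite, 'l::finite) S3code \<Rightarrow> 'g^'k \<Rightarrow> 'g^'k \<Rightarrow> 'g^'k \<Rightarrow> 'g^'k" where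
  "out_t3 C X1 X2 X3 = dec_t3 C (e_v1t3 C (val_u1v1 C X1 X2 X3)) (e_v2t3 C (val_u2v2 C X1 X2 X3))"

definition is_S3_solution :: "('g::ab_group_add, 'k::finite, 'l::finite) S3code \<Rightarrow> bool" where
  "is_S3_solution C \<longleftrightarrow>
     (\<forall>X1 X2 X3. out_t1 C X1 X2 X3 = X1 + X2 + X3
               \<and> out_t2 C X1 X2 X3 = X1 + X2 + X3
               \<and> out_t3 C X1 X2 X3 = X1 + X2 + X3)"

end

theory Submission
  imports Defs
begin

theorem mainTheorem6:
  fixes C :: "('g::{ab_group_add, finite}, 'k::finite, 'l::finite) S3code"
  assumes "is_S3_solution C"
  shows "inj (\<lambda>(X1, X2, X3). (val_u1v1 C X1 X2 X3, val_u2v2 C X1 X2 X3))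
         \<and> CARD('g) ^ (2 * CARD('l)) \<ge> CARD('g) ^ (3 * CARD('k))"
proof -
  have sol: "\<And>X1 X2 X3. out_t1 C X1 X2 X3 = X1 + X2 + X3
               \<and> out_t2 C X1 X2 X3 = X1 + X2 + X3
               \<and> out_t3 C X1 X2 X3 = X1 + X2 + X3"
    using assms unfolding is_S3_solution_def by blast
  have A: "X3 = X3'" if "val_u1v1 C X1 X2 X3 = val_u1v1 C X1 X2 X3'" for X1 X2 X3 X3'
  proof -
    have "out_t1 C X1 X2 X3 = out_t1 C X1 X2 X3'"
      using that unfolding out_t1_def val_u3t1_def by simp
    then show ?thesis using sol[of X1 X2 X3] sol[of X1 X2 X3'] by simp
  qed
  have A': "val_u1v1 C X1 X2 X3 = val_u1v1 C X1 Y X3" for X1 X2 Y X3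
    unfolding val_u1v1_def by simp
  have B: "X2 + X3 = X2' + X3'" if "val_u2v2 C X1 X2 X3 = val_u2v2 C X1 X2' X3'" for X1 X2 X3 X2' X3'
  proof -
    have "out_t2 C X1 X2 X3 = out_t2 C X1 X2' X3'"
      using that unfolding out_t2_def by simp
    then have "X1 + X2 + X3 = X1 + X2' + X3'" using sol[of X1 X2 X3] sol[of X1 X2' X3'] by simp
    then show ?thesis by (simp add: add.assoc)
  qed
  have B': "val_u2v2 C X1 X2 X3 = val_u2v2 C Y X2 X3" for X1 X2 Y X3
    unfolding val_u2v2_def by simp
  have inj: "inj (\<lambda>(X1, X2, X3). (val_u1v1 C X1 X2 X3, val_u2v2 C X1 X2 X3))"
  proof (rule injI, clarsimp)
    fix X1 X2 X3 X1' X2' X3'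
    assume a: "val_u1v1 C X1 X2 X3 = val_u1v1 C X1' X2' X3'"
      and b: "val_u2v2 C X1 X2 X3 = val_u2v2 C X1' X2' X3'"
    have "out_t3 C X1 X2 X3 = out_t3 C X1' X2' X3'"
      using a b unfolding out_t3_def by simp
    then have s: "X1 + X2 + X3 = X1' + X2' + X3'" using sol[of X1 X2 X3] sol[of X1' X2' X3'] by simp
    have "val_u2v2 C X1 X2 X3 = val_u2v2 C X1 X2' X3'" using b B' by metis
    then have "X2 + X3 = X2' + X3'" by (rule B)
    with s have e1: "X1 = X1'" by (simp add: add.assoc)
    have "val_u1v1 C X1 X2 X3 = val_u1v1 C X1 X2 X3'" using a A' e1 by metis
    then have e3: "X3 = X3'" by (rule A)
    from \<open>X2 + X3 = X2' + X3'\<close> e3 have "X2 = X2'" by simp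
    with e1 e3 show "X1 = X1' \<and> X2 = X2' \<and> X3 = X3'" by simp
  qed
  have "card (UNIV :: (('g^'k) \<times> ('g^'k) \<times> ('g^'k)) set) \<le> card (UNIV :: (('g^'l) \<times> ('g^'l)) set)"
    using card_inj_on_le[OF inj, of UNIV] by simp
  then have h: "(CARD('g) ^ CARD('k)) * ((CARD('g) ^ CARD('k)) * (CARD('g) ^ CARD('k))) \<le> (CARD('g) ^ CARD('l)) * (CARD('g) ^ CARD('l))"
    by (simp only: UNIV_Times_UNIV[symmetric] card_cartesian_product CARD_vec)
  have e1: "CARD('g) ^ (3 * CARD('k)) = (CARD('g) ^ CARD('k)) * ((CARD('g) ^ CARD('k)) * (CARD('g) ^ CARD('k)))"
    by (simp add: power_add[symmetric] numeral_3_eq_3)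
  have e2: "CARD('g) ^ (2 * CARD('l)) = (CARD('g) ^ CARD('l)) * (CARD('g) ^ CARD('l))"
    by (simp add: power_add[symmetric] mult_2)
  have "CARD('g) ^ (3 * CARD('k)) \<le> CARD('g) ^ (2 * CARD('l))"
    unfolding e1 e2 by (rule h)
  with inj show ?thesis by simp
qed

end
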